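(* Let $\theta_1<\theta_2$, $f\in C^1([\theta_1,\theta_2])$, $\gamma>1$, and let $I\subseteq[\theta_1,\theta_2]$ be a closed interval. Suppose that, for positive constants $A$ and $\alpha$ with $\alpha<2\gamma-2$, one of the following holds: $(f'(s))^2\ge A(s-\theta_1)^\alpha$ for all $s\in I$; or $(f'(s))^2\ge A(\theta_2-s)^\alpha$ for all $s\in I$. Then there is a constant $C>0$ depending only on $A,\alpha,\theta_1,\theta_2,\gamma$ such that $\int_I|f(s)|^{-1/\gamma}\,ds\le C$. *)

theory Defs
  imports "HOL-Analysis.Analysis"
begin

end

theory Submission
  imports Defs
begin

lemma coreA:
  fixes g g' :: "real \<Rightarrow> real"
  assumes tx: "t \<le> x" and p: "p > 0" and k: "k \<ge> 0"
    and cont: "continuous_on {t..x} g"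
    and der: "\<And>s. t < s \<Longrightarrow> s < x \<Longrightarrow> (g has_real_derivative g' s) (at s)"
    and bd: "\<And>s. t < s \<Longrightarrow> s < x \<Longrightarrow> g' s \<ge> k * p * (s - t) powr (p - 1)"
  shows "g x - g t \<ge> k * (x - t) powr p"
proof -
  define h where "h s = g s - k * (s - t) powr p" for s
  have "h t \<le> h x"
  proof (rule DERIV_nonneg_imp_increasing_open[OF tx])
    fix s assume s: "t < s" "s < x"
    have "((\<lambda>s. s - t) has_real_derivative 1) (at s)"
      by (auto intro!: derivative_eq_intros)
    from DERIV_fun_powr[OF this, of p] s
    have "((\<lambda>s. (s - t) powr p) has_real_derivative p * (s - t) powr (p - 1)) (at s)"
      by simp
    hence "(h has_real_derivative g' s - k * (p * (s - t) powr (p - 1))) (at s)"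
      unfolding h_def by (auto intro!: derivative_eq_intros der s)
    moreover have "g' s - k * (p * (s - t) powr (p - 1)) \<ge> 0" using bd[OF s] by (simp add: mult.assoc)
    ultimately show "\<exists>y. (h has_real_derivative y) (at s) \<and> 0 \<le> y" by blast
  next
    show "continuous_on {t..x} h" unfolding h_def
      using p by (auto intro!: continuous_intros continuous_on_powr' cont)
  qed
  thus ?thesis using p unfolding h_def by simp
qed

lemma coreB:
  fixes g g' :: "real \<Rightarrow> real"
  assumes tx: "t \<le> x" and p: "p > 0" and k: "k \<ge> 0"
    and cont: "continuous_on {t..x} g"
    and der: "\<And>s. t < s \<Longrightarrow> s < x \<Longrightarrow> (g has_real_derivative g' s) (at s)"
    and bd: "\<And>s. t < s \<Longrightarrow> s < x \<Longrightarrow> g' s \<ge> k * p * (x - s) powr (p - 1)"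
  shows "g x - g t \<ge> k * (x - t) powr p"
proof -
  define h where "h s = g s + k * (x - s) powr p" for s
  have "h t \<le> h x"
  proof (rule DERIV_nonneg_imp_increasing_open[OF tx])
    fix s assume s: "t < s" "s < x"
    have "((\<lambda>s. x - s) has_real_derivative -1) (at s)"
      by (auto intro!: derivative_eq_intros)
    from DERIV_fun_powr[OF this, of p] s
    have "((\<lambda>s. (x - s) powr p) has_real_derivative - (p * (x - s) powr (p - 1))) (at s)"
      by simp
    hence "(h has_real_derivative g' s + k * (- (p * (x - s) powr (p - 1)))) (at s)"
      unfolding h_def by (auto intro!: derivative_eq_intros der s)
    moreover have "g' s + k * (- (p * (x - s) powr (p - 1))) \<ge> 0" using bd[OF s] by (simp add: mult.assoc)
    ultimately show "\<exists>y. (h has_real_derivative y) (at s) \<and> 0 \<le> y" by blast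
  next
    show "continuous_on {t..x} h" unfolding h_def
      using p by (auto intro!: continuous_intros continuous_on_powr' cont)
  qed
  thus ?thesis using p unfolding h_def by simp
qed

lemma minabs:
  fixes f :: "real \<Rightarrow> real"
  assumes "a \<le> b" "continuous_on {a..b} f"
  shows "\<exists>z\<in>{a..b}. \<forall>s\<in>{a..b}. \<bar>f s - f z\<bar> \<le> \<bar>f s\<bar>"
proof -
  obtain z where z: "z \<in> {a..b}" "\<And>y. y \<in> {a..b} \<Longrightarrow> \<bar>f z\<bar> \<le> \<bar>f y\<bar>"
  proof -
    have "continuous_on {a..b} (\<lambda>s. \<bar>f s\<bar>)" using assms(2) by (auto intro!: continuous_intros)
    thus ?thesis using continuous_attains_inf[of "{a..b}" "\<lambda>s. \<bar>f s\<bar>"] assms that by auto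
  qed
  have "\<bar>f s - f z\<bar> \<le> \<bar>f s\<bar>" if s: "s \<in> {a..b}" for s
  proof (cases "f s * f z \<ge> 0")
    case True
    then show ?thesis using z(2)[OF s]
      by (cases "f s \<ge> 0"; cases "f z \<ge> 0") (auto simp: mult_le_0_iff zero_le_mult_iff)
  next
    case False
    hence "0 \<in> closed_segment (f s) (f z)"
      by (auto simp: closed_segment_eq_real_ivl zero_le_mult_iff)
    moreover have "continuous_on (closed_segment s z) f"
      using s z(1) by (auto intro: continuous_on_subset[OF assms(2)] simp: closed_segment_eq_real_ivl)
    ultimately obtain w where w: "w \<in> closed_segment s z" "f w = 0"
      using IVT'_closed_segment_real by blast
    have "w \<in> {a..b}" using w(1) s z(1) by (auto simp: closed_segment_eq_real_ivl split: if_splits)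
    from z(2)[OF this] w(2) have "f z = 0" by simp
    with False show ?thesis by simp
  qed
  with z(1) show ?thesis by blast
qed

lemma signconst:
  fixes g :: "real \<Rightarrow> real"
  assumes "continuous_on {a..b} g" "\<And>s. a < s \<Longrightarrow> s < b \<Longrightarrow> g s \<noteq> 0"
  shows "(\<forall>s\<in>{a<..<b}. g s > 0) \<or> (\<forall>s\<in>{a<..<b}. g s < 0)"
proof (rule ccontr)
  assume "\<not> ?thesis"
  then obtain s1 s2 where s: "s1 \<in> {a<..<b}" "s2 \<in> {a<..<b}" "g s1 \<le> 0" "g s2 \<ge> 0"
    by (auto simp: not_less)
  hence "0 \<in> closed_segment (g s1) (g s2)"
    by (auto simp: closed_segment_eq_real_ivl)
  moreover have "continuous_on (closed_segment s1 s2) g"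
    using s by (auto intro: continuous_on_subset[OF assms(1)] simp: closed_segment_eq_real_ivl)
  ultimately obtain w where w: "w \<in> closed_segment s1 s2" "g w = 0"
    using IVT'_closed_segment_real by blast
  have "a < w" "w < b" using w(1) s by (auto simp: closed_segment_eq_real_ivl split: if_splits)
  with assms(2) w(2) show False by blast
qed

lemma intbound:
  fixes q L z K :: real
  assumes q: "0 \<le> q" "q < 1" and L: "L \<ge> 0"
  shows "((\<lambda>s. K * \<bar>s - z\<bar> powr (- q)) has_integral (K * (2 * (L powr (1 - q) / (1 - q))))) {z - L..z + L}"
proof -
  have h0: "((\<lambda>x. x powr (- q)) has_integral (L powr (1 - q) / (1 - q))) {0..L}"
    using has_integral_powr_from_0[of "-q" L] q L by simp
  have r: "((\<lambda>s. \<bar>s - z\<bar> powr (- q)) has_integral (L powr (1 - q) / (1 - q))) {z..z + L}"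
  proof -
    have "((\<lambda>x. (\<lambda>x. x powr (- q)) (1 *\<^sub>R x + (- z))) has_integral ((L powr (1 - q) / (1 - q)) /\<^sub>R 1 ^ DIM(real)))
           (cbox ((0 - (- z)) /\<^sub>R 1) ((L - (- z)) /\<^sub>R 1))"
      using has_integral_affinity'[of _ _ 0 L 1 "-z"] h0 by simp
    hence "((\<lambda>x. (x - z) powr (- q)) has_integral (L powr (1 - q) / (1 - q))) {z..z+L}"
      by (simp add: add.commute)
    thus ?thesis by (rule has_integral_eq[rotated]) auto
  qed
  have l: "((\<lambda>s. \<bar>s - z\<bar> powr (- q)) has_integral (L powr (1 - q) / (1 - q))) {z - L..z}"
  proof -
    have "((\<lambda>x. (\<lambda>x. x powr (- q)) ((-1) *\<^sub>R x + z)) has_integral ((L powr (1 - q) / (1 - q)) /\<^sub>R \<bar>-1\<bar> ^ DIM(real)))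
           ((\<lambda>x. (1 / (-1)) *\<^sub>R x + -((1 / (-1)) *\<^sub>R z)) ` cbox 0 L)"
      using has_integral_affinity[of _ _ 0 L "-1" z] h0 by simp
    moreover have "((\<lambda>x. (1 / (-1)) *\<^sub>R x + -((1 / (-1)) *\<^sub>R z)) ` cbox 0 L) = {z - L..z}"
      using L by (auto simp: image_iff intro!: bexI[where x="z - _"])
    ultimately have "((\<lambda>x. (z - x) powr (- q)) has_integral (L powr (1 - q) / (1 - q))) {z - L..z}"
      by simp
    thus ?thesis by (rule has_integral_eq[rotated]) auto
  qed
  have "((\<lambda>s. \<bar>s - z\<bar> powr (- q)) has_integral (2 * (L powr (1 - q) / (1 - q)))) {z - L..z + L}"
    using has_integral_combine[OF _ _ l r] L by simp
  thus ?thesis by (rule has_integral_mult_right)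
qed

lemma sqrtbound:
  fixes A w y \<alpha> :: real
  assumes "A * w powr \<alpha> \<le> y\<^sup>2" "0 \<le> w" "0 \<le> A"
  shows "sqrt A * w powr (\<alpha> / 2) \<le> \<bar>y\<bar>"
proof (rule power2_le_imp_le)
  have "(sqrt A * w powr (\<alpha> / 2))\<^sup>2 = A * (w powr (\<alpha> / 2) * w powr (\<alpha> / 2))"
    using assms by (simp add: power2_eq_square algebra_simps)
  also have "\<dots> = A * w powr \<alpha>" by (simp add: powr_add[symmetric])
  finally show "(sqrt A * w powr (\<alpha> / 2))\<^sup>2 \<le> \<bar>y\<bar>\<^sup>2" using assms by simp
qed simp

theorem lemma3p4:
  fixes \<theta>1 \<theta>2 \<gamma> A \<alpha> :: real
  assumes "\<theta>1 < \<theta>2" and "\<gamma> > 1" and "A > 0" and "\<alpha> > 0" and "\<alpha> < 2 * \<gamma> - 2"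
  shows "\<exists>C>0. \<forall>(f :: real \<Rightarrow> real) (f' :: real \<Rightarrow> real) (a :: real) (b :: real).
           (\<forall>s\<in>{\<theta>1..\<theta>2}. (f has_real_derivative f' s) (at s within {\<theta>1..\<theta>2}))
         \<and> continuous_on {\<theta>1..\<theta>2} f'
         \<and> \<theta>1 \<le> a \<and> a \<le> b \<and> b \<le> \<theta>2
         \<and> ((\<forall>s\<in>{a..b}. (f' s)\<^sup>2 \<ge> A * (s - \<theta>1) powr \<alpha>)
            \<or> (\<forall>s\<in>{a..b}. (f' s)\<^sup>2 \<ge> A * (\<theta>2 - s) powr \<alpha>))
         \<longrightarrow> (\<integral>\<^sup>+ s\<in>{a..b}. ennreal (\<bar>f s\<bar> powr (- 1 / \<gamma>)) \<partial>lborel) \<le> ennreal C"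
proof -
  define \<beta> where "\<beta> = \<alpha> / 2"
  define p where "p = \<beta> + 1"
  define k where "k = sqrt A / p"
  define q where "q = p / \<gamma>"
  define L where "L = \<theta>2 - \<theta>1"
  define K where "K = k powr (- 1 / \<gamma>)"
  define C where "C = K * (2 * (L powr (1 - q) / (1 - q))) + 1"
  have \<beta>: "\<beta> > 0" using assms unfolding \<beta>_def by simp
  have p: "p > 0" "p - 1 = \<beta>" unfolding p_def using \<beta> by auto
  have k: "k > 0" using assms p unfolding k_def by simp
  have pa: "p - 1 = \<alpha> / 2" using p(2) unfolding \<beta>_def .
  have kp: "k * p = sqrt A" using p unfolding k_def by simp
  have q: "0 \<le> q" "q < 1" using assms p unfolding q_def p_def \<beta>_def by (auto simp: field_simps)
  have L: "L > 0" using assms unfolding L_def by simp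
  have K: "K > 0" using k unfolding K_def by simp
  have C: "C > 0" unfolding C_def using K L q by (auto intro!: add_nonneg_pos)
  show ?thesis
  proof (intro exI[of _ C] conjI C allI impI)
    fix f f' :: "real \<Rightarrow> real" and a b :: real
    assume H: "(\<forall>s\<in>{\<theta>1..\<theta>2}. (f has_real_derivative f' s) (at s within {\<theta>1..\<theta>2}))
         \<and> continuous_on {\<theta>1..\<theta>2} f'
         \<and> \<theta>1 \<le> a \<and> a \<le> b \<and> b \<le> \<theta>2
         \<and> ((\<forall>s\<in>{a..b}. (f' s)\<^sup>2 \<ge> A * (s - \<theta>1) powr \<alpha>)
            \<or> (\<forall>s\<in>{a..b}. (f' s)\<^sup>2 \<ge> A * (\<theta>2 - s) powr \<alpha>))"
    hence der: "\<And>s. s \<in> {\<theta>1..\<theta>2} \<Longrightarrow> (f has_real_derivative f' s) (at s within {\<theta>1..\<theta>2})"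
      and cf': "continuous_on {\<theta>1..\<theta>2} f'" and ab: "\<theta>1 \<le> a" "a \<le> b" "b \<le> \<theta>2"
      and disj: "(\<forall>s\<in>{a..b}. (f' s)\<^sup>2 \<ge> A * (s - \<theta>1) powr \<alpha>)
            \<or> (\<forall>s\<in>{a..b}. (f' s)\<^sup>2 \<ge> A * (\<theta>2 - s) powr \<alpha>)" by auto
    have cf: "continuous_on {\<theta>1..\<theta>2} f" using der by (rule DERIV_continuous_on)
    have cfab: "continuous_on {a..b} f" by (rule continuous_on_subset[OF cf]) (use ab in auto)
    have derat: "(f has_real_derivative f' s) (at s)" if "a < s" "s < b" for s
      using der[of s] that ab at_within_interior[of s "{\<theta>1..\<theta>2}"] by auto
    have nz: "f' s \<noteq> 0" if "a < s" "s < b" for s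
      using disj
    proof
      assume h: "\<forall>s\<in>{a..b}. (f' s)\<^sup>2 \<ge> A * (s - \<theta>1) powr \<alpha>"
      have "0 < A * (s - \<theta>1) powr \<alpha>" using assms that ab by simp
      moreover have "A * (s - \<theta>1) powr \<alpha> \<le> (f' s)\<^sup>2" using h that by auto
      ultimately show ?thesis by auto
    next
      assume h: "\<forall>s\<in>{a..b}. (f' s)\<^sup>2 \<ge> A * (\<theta>2 - s) powr \<alpha>"
      have "0 < A * (\<theta>2 - s) powr \<alpha>" using assms that ab by simp
      moreover have "A * (\<theta>2 - s) powr \<alpha> \<le> (f' s)\<^sup>2" using h that by auto
      ultimately show ?thesis by auto
    qed
    have "(\<forall>s\<in>{a<..<b}. f' s > 0) \<or> (\<forall>s\<in>{a<..<b}. f' s < 0)"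
      by (rule signconst[OF continuous_on_subset[OF cf'] nz]) (use ab in auto)
    then obtain \<sigma> :: real where \<sigma>: "\<sigma> = 1 \<or> \<sigma> = -1" "\<And>s. s \<in> {a<..<b} \<Longrightarrow> \<sigma> * f' s = \<bar>f' s\<bar>"
      by (metis abs_of_neg abs_of_pos mult_1 mult_minus1)
    have key: "k * (x - t) powr p \<le> \<bar>f x - f t\<bar>" if tx: "a \<le> t" "t \<le> x" "x \<le> b" for t x
    proof -
      have cg: "continuous_on {t..x} (\<lambda>s. \<sigma> * f s)"
        using cfab tx by (auto intro!: continuous_intros intro: continuous_on_subset)
      have dg: "((\<lambda>s. \<sigma> * f s) has_real_derivative \<sigma> * f' s) (at s)" if "t < s" "s < x" for s
        using derat[of s] that tx by (auto intro!: derivative_eq_intros)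
      have "k * (x - t) powr p \<le> \<sigma> * f x - \<sigma> * f t"
        using disj
      proof
        assume h: "\<forall>s\<in>{a..b}. (f' s)\<^sup>2 \<ge> A * (s - \<theta>1) powr \<alpha>"
        show ?thesis
        proof (rule coreA[OF tx(2) p(1) less_imp_le[OF k] cg dg])
          fix s assume s: "t < s" "s < x"
          have "k * p * (s - t) powr (p - 1) = sqrt A * (s - t) powr (\<alpha> / 2)"
            unfolding kp pa by (rule refl)
          also have "\<dots> \<le> sqrt A * (s - \<theta>1) powr (\<alpha> / 2)"
            using s tx ab assms by (intro mult_left_mono powr_mono2) auto
          also have "\<dots> \<le> \<bar>f' s\<bar>"
            using h s tx ab assms by (intro sqrtbound) auto
          also have "\<dots> = \<sigma> * f' s" using \<sigma>(2)[of s] s tx by auto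
          finally show "k * p * (s - t) powr (p - 1) \<le> \<sigma> * f' s" .
        qed auto
      next
        assume h: "\<forall>s\<in>{a..b}. (f' s)\<^sup>2 \<ge> A * (\<theta>2 - s) powr \<alpha>"
        show ?thesis
        proof (rule coreB[OF tx(2) p(1) less_imp_le[OF k] cg dg])
          fix s assume s: "t < s" "s < x"
          have "k * p * (x - s) powr (p - 1) = sqrt A * (x - s) powr (\<alpha> / 2)"
            unfolding kp pa by (rule refl)
          also have "\<dots> \<le> sqrt A * (\<theta>2 - s) powr (\<alpha> / 2)"
            using s tx ab assms by (intro mult_left_mono powr_mono2) auto
          also have "\<dots> \<le> \<bar>f' s\<bar>"
            using h s tx ab assms by (intro sqrtbound) auto
          also have "\<dots> = \<sigma> * f' s" using \<sigma>(2)[of s] s tx by auto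
          finally show "k * p * (x - s) powr (p - 1) \<le> \<sigma> * f' s" .
        qed auto
      qed
      also have "\<dots> \<le> \<bar>f x - f t\<bar>" using \<sigma>(1) by auto
      finally show ?thesis .
    qed
    obtain z where z: "z \<in> {a..b}" "\<And>s. s \<in> {a..b} \<Longrightarrow> \<bar>f s - f z\<bar> \<le> \<bar>f s\<bar>"
      using minabs[OF ab(2) cfab] by blast
    have pt: "\<bar>f s\<bar> powr (- 1 / \<gamma>) \<le> K * \<bar>s - z\<bar> powr (- q)"
      if s: "s \<in> {a..b}" "s \<noteq> z" for s
    proof (cases "f s = 0")
      case True then show ?thesis using K by simp
    next
      case False
      have "k * \<bar>s - z\<bar> powr p \<le> \<bar>f s - f z\<bar>"
      proof (cases "z \<le> s")
        case True then show ?thesis using key[of z s] z s by simp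
      next
        case False then show ?thesis using key[of s z] z s by (simp add: abs_minus_commute)
      qed
      also have "\<dots> \<le> \<bar>f s\<bar>" using z(2)[OF s(1)] .
      finally have le: "k * \<bar>s - z\<bar> powr p \<le> \<bar>f s\<bar>" .
      have pos: "0 < k * \<bar>s - z\<bar> powr p" using k s by simp
      have "\<bar>f s\<bar> powr (- 1 / \<gamma>) \<le> (k * \<bar>s - z\<bar> powr p) powr (- 1 / \<gamma>)"
        using le pos assms by (intro powr_mono2') auto
      also have "\<dots> = K * \<bar>s - z\<bar> powr (- q)"
        using k unfolding K_def q_def by (simp add: powr_mult powr_powr)
      finally show ?thesis .
    qed
    have zL: "{a..b} \<subseteq> {z - L..z + L}" using z ab unfolding L_def by auto
    have "(\<integral>\<^sup>+ s\<in>{a..b}. ennreal (\<bar>f s\<bar> powr (- 1 / \<gamma>)) \<partial>lborel)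
        \<le> (\<integral>\<^sup>+ s. ennreal (K * \<bar>s - z\<bar> powr (- q)) * indicator {z - L..z + L} s \<partial>lborel)"
    proof (rule nn_integral_mono_AE)
      show "AE s in lborel. ennreal (\<bar>f s\<bar> powr (- 1 / \<gamma>)) * indicator {a..b} s
              \<le> ennreal (K * \<bar>s - z\<bar> powr (- q)) * indicator {z - L..z + L} s"
        using AE_lborel_singleton[of z]
      proof eventually_elim
        case (elim s)
        show ?case
        proof (cases "s \<in> {a..b}")
          case True
          then show ?thesis using pt[OF True elim] zL by (auto intro: ennreal_leI)
        qed simp
      qed
    qed
    also have "\<dots> = ennreal (K * (2 * (L powr (1 - q) / (1 - q))))"
      by (rule nn_integral_has_integral_lebesgue'[OF _ intbound[OF q less_imp_le[OF L]]])
         (use K in simp)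
    also have "\<dots> \<le> ennreal C" unfolding C_def by (intro ennreal_leI) simp
    finally show "(\<integral>\<^sup>+ s\<in>{a..b}. ennreal (\<bar>f s\<bar> powr (- 1 / \<gamma>)) \<partial>lborel) \<le> ennreal C" .
  qed
qed

end
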